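(* For every positive integer $P$, the linear program (NS-LP) defined in the context is a relaxation of problem (NS) with parameter $P$: for every feasible solution $(\boldsymbol{x},\boldsymbol{y},\boldsymbol{r},\boldsymbol{z},\boldsymbol{\theta})$ of (NS) there exists a feasible solution of (NS-LP) with the same $\boldsymbol{x},\boldsymbol{y}$ and objective value no larger; in particular the optimal value of (NS-LP) is at most the optimal value of (NS).
   Context: Network: a directed graph $\mathcal{G}=(\mathcal{I},\mathcal{L})$; link $(i,j)$ has delay $d_{ij}\ge0$ and capacity $C_{ij}$; cloud nodes $\mathcal{V}\subseteq\mathcal{I}$ with capacities $\mu_v$. Services $k\in\mathcal{K}$ have source $S(k)\notin\mathcal{V}$, destination $D(k)\notin\mathcal{V}$, function index set $\mathcal{F}(k)=\{1,\dots,\ell_k\}$, rates $\lambda_s(k)$ for $s\in\mathcal{F}(k)\cup\{0\}$, NFV delays $d_{v,s}(k)$, and E2E thresholds $\Theta_k$; $\sigma>0$ is a constant, $\mathcal{P}=\{1,\dots,P\}$. Convention: for every node $i\in\mathcal{I}$, $x_{i,0}(k)=1$ iff $i=S(k)$ (else $0$), $x_{i,\ell_k+1}(k)=1$ iff $i=D(k)$ (else $0$), and $x_{i,s}(k)=0$ for $i\notin\mathcal{V}$, $s\in\mathcal{F}(k)$. Write $\theta_N(k)=\sum_{v\in\mathcal{V}}\sum_{s\in\mathcal{F}(k)}d_{v,s}(k)x_{v,s}(k)$ and $\theta_L(k)=\sum_{s\in\mathcal{F}(k)\cup\{0\}}\theta(k,s)$; objective $\Phi=\sum_{v}y_v+\sigma\sum_k(\theta_L(k)+\theta_N(k))$.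 Problem (NS): minimize $\Phi$ over $x_{v,s}(k),y_v\in\{0,1\}$, $r(k,s,p),r_{ij}(k,s,p)\ge0$, $z_{ij}(k,s,p)\in\{0,1\}$, $\theta(k,s)\ge0$ subject to: $\sum_{v}x_{v,s}(k)=1$; $x_{v,s}(k)\le y_v$; $\sum_k\sum_{s\in\mathcal{F}(k)}\lambda_s(k)x_{v,s}(k)\le\mu_vy_v$; $\sum_{p}r(k,s,p)=1$; $r_{ij}(k,s,p)=r(k,s,p)z_{ij}(k,s,p)$; $\sum_k\sum_{s\in\mathcal{F}(k)\cup\{0\}}\sum_p\lambda_s(k)r_{ij}(k,s,p)\le C_{ij}$; $\sum_{j:(j,i)\in\mathcal{L}}z_{ji}(k,s,p)-\sum_{j:(i,j)\in\mathcal{L}}z_{ij}(k,s,p)=x_{i,s+1}(k)-x_{i,s}(k)$ for all $i\in\mathcal{I}$; $\theta(k,s)\ge\sum_{(i,j)}d_{ij}z_{ij}(k,s,p)$; $\theta_N(k)+\theta_L(k)\le\Theta_k$ (all for all relevant indices $v\in\mathcal{V},k\in\mathcal{K},s,p\in\mathcal{P},(i,j)\in\mathcal{L}$). Problem (NS-LP): minimize $\Phi$ over continuous variables $x_{v,s}(k),y_v\in[0,1]$, $z_{ij}(k,s)\in[0,1]$, $\theta(k,s)\ge0$ (single path index) subject to: $\sum_v x_{v,s}(k)=1$; $x_{v,s}(k)\le y_v$; $\sum_k\sum_{s\in\mathcal{F}(k)}\lambda_s(k)x_{v,s}(k)\le\mu_vy_v$; $\sum_k\sum_{s\in\mathcal{F}(k)\cup\{0\}}\lambda_s(k)z_{ij}(k,s)\le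 C_{ij}$; $\sum_{j:(j,i)\in\mathcal{L}}z_{ji}(k,s)-\sum_{j:(i,j)\in\mathcal{L}}z_{ij}(k,s)=x_{i,s+1}(k)-x_{i,s}(k)$ for all $i\in\mathcal{I}$; $\theta(k,s)\ge\sum_{(i,j)}d_{ij}z_{ij}(k,s)$; $\theta_N(k)+\theta_L(k)\le\Theta_k$. *)

theory Defs
  imports Complex_Main
begin

record ('i, 'k) nsinst =
  nodes    :: "'i set"
  links    :: "('i \<times> 'i) set"
  ldelay   :: "'i \<times> 'i \<Rightarrow> real"
  cap      :: "'i \<times> 'i \<Rightarrow> real"
  clouds   :: "'i set"
  mu       :: "'i \<Rightarrow> real"
  services :: "'k set"
  src      :: "'k \<Rightarrow> 'i"
  dst      :: "'k \<Rightarrow> 'i"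
  len      :: "'k \<Rightarrow> nat"
  rate     :: "'k \<Rightarrow> nat \<Rightarrow> real"
  nfvdelay :: "'i \<Rightarrow> 'k \<Rightarrow> nat \<Rightarrow> real"
  thr      :: "'k \<Rightarrow> real"
  sigma    :: real

definition wf_inst :: "('i, 'k) nsinst \<Rightarrow> bool" where
  "wf_inst N \<longleftrightarrow> finite (nodes N) \<and> links N \<subseteq> nodes N \<times> nodes N
     \<and> (\<forall>e \<in> links N. ldelay N e \<ge> 0)
     \<and> clouds N \<subseteq> nodes N \<and> finite (services N)
     \<and> (\<forall>k \<in> services N. src N k \<in> nodes N - clouds N \<and> dst N k \<in> nodes N - clouds N)
     \<and> sigma N > 0"

definition Fk :: "('i, 'k) nsinst \<Rightarrow> 'k \<Rightarrow> nat set" where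
  "Fk N k = {1..len N k}"

definition xext :: "('i, 'k) nsinst \<Rightarrow> ('k \<Rightarrow> 'i \<Rightarrow> nat \<Rightarrow> real) \<Rightarrow> 'k \<Rightarrow> 'i \<Rightarrow> nat \<Rightarrow> real" where
  "xext N x k i s =
     (if s = 0 then (if i = src N k then 1 else 0)
      else if s = len N k + 1 then (if i = dst N k then 1 else 0)
      else if i \<in> clouds N then x k i s else 0)"

definition thetaN :: "('i, 'k) nsinst \<Rightarrow> ('k \<Rightarrow> 'i \<Rightarrow> nat \<Rightarrow> real) \<Rightarrow> 'k \<Rightarrow> real" where
  "thetaN N x k = (\<Sum>v \<in> clouds N. \<Sum>s \<in> Fk N k. nfvdelay N v k s * x k v s)"

definition thetaL :: "('i, 'k) nsinst \<Rightarrow> ('k \<Rightarrow> nat \<Rightarrow> real) \<Rightarrow> 'k \<Rightarrow> real" where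
  "thetaL N th k = (\<Sum>s \<in> {0..len N k}. th k s)"

definition Phi :: "('i, 'k) nsinst \<Rightarrow> ('k \<Rightarrow> 'i \<Rightarrow> nat \<Rightarrow> real) \<Rightarrow> ('i \<Rightarrow> real)
                    \<Rightarrow> ('k \<Rightarrow> nat \<Rightarrow> real) \<Rightarrow> real" where
  "Phi N x y th = (\<Sum>v \<in> clouds N. y v)
      + sigma N * (\<Sum>k \<in> services N. thetaL N th k + thetaN N x k)"

definition placement_ok :: "('i, 'k) nsinst \<Rightarrow> ('k \<Rightarrow> 'i \<Rightarrow> nat \<Rightarrow> real) \<Rightarrow> ('i \<Rightarrow> real) \<Rightarrow> bool" where
  "placement_ok N x y \<longleftrightarrow>
     (\<forall>k \<in> services N. \<forall>s \<in> Fk N k. (\<Sum>v \<in> clouds N. x k v s) = 1)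
   \<and> (\<forall>k \<in> services N. \<forall>s \<in> Fk N k. \<forall>v \<in> clouds N. x k v s \<le> y v)
   \<and> (\<forall>v \<in> clouds N. (\<Sum>k \<in> services N. \<Sum>s \<in> Fk N k. rate N k s * x k v s) \<le> mu N v * y v)"

definition NS_feasible ::
  "('i, 'k) nsinst \<Rightarrow> nat \<Rightarrow> ('k \<Rightarrow> 'i \<Rightarrow> nat \<Rightarrow> real) \<Rightarrow> ('i \<Rightarrow> real)
   \<Rightarrow> ('k \<Rightarrow> nat \<Rightarrow> nat \<Rightarrow> real) \<Rightarrow> ('k \<Rightarrow> nat \<Rightarrow> nat \<Rightarrow> 'i \<times> 'i \<Rightarrow> real)
   \<Rightarrow> ('k \<Rightarrow> nat \<Rightarrow> nat \<Rightarrow> 'i \<times> 'i \<Rightarrow> real) \<Rightarrow> ('k \<Rightarrow> nat \<Rightarrow> real) \<Rightarrow> bool" where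
  "NS_feasible N P x y r rl z th \<longleftrightarrow>
     (\<forall>k \<in> services N. \<forall>v \<in> clouds N. \<forall>s \<in> Fk N k. x k v s \<in> {0, 1})
   \<and> (\<forall>v \<in> clouds N. y v \<in> {0, 1})
   \<and> (\<forall>k \<in> services N. \<forall>s \<in> {0..len N k}. \<forall>p \<in> {1..P}. r k s p \<ge> 0)
   \<and> (\<forall>k \<in> services N. \<forall>s \<in> {0..len N k}. \<forall>p \<in> {1..P}. \<forall>e \<in> links N. rl k s p e \<ge> 0)
   \<and> (\<forall>k \<in> services N. \<forall>s \<in> {0..len N k}. \<forall>p \<in> {1..P}. \<forall>e \<in> links N. z k s p e \<in> {0, 1})
   \<and> (\<forall>k \<in> services N. \<forall>s \<in> {0..len N k}. th k s \<ge> 0)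
   \<and> placement_ok N x y
   \<and> (\<forall>k \<in> services N. \<forall>s \<in> {0..len N k}. (\<Sum>p \<in> {1..P}. r k s p) = 1)
   \<and> (\<forall>k \<in> services N. \<forall>s \<in> {0..len N k}. \<forall>p \<in> {1..P}. \<forall>e \<in> links N.
         rl k s p e = r k s p * z k s p e)
   \<and> (\<forall>e \<in> links N. (\<Sum>k \<in> services N. \<Sum>s \<in> {0..len N k}. \<Sum>p \<in> {1..P}.
         rate N k s * rl k s p e) \<le> cap N e)
   \<and> (\<forall>k \<in> services N. \<forall>s \<in> {0..len N k}. \<forall>p \<in> {1..P}. \<forall>i \<in> nodes N.
         (\<Sum>j \<in> {j. (j, i) \<in> links N}. z k s p (j, i))
       - (\<Sum>j \<in> {j. (i, j) \<in> links N}. z k s p (i, j))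
       = xext N x k i (s + 1) - xext N x k i s)
   \<and> (\<forall>k \<in> services N. \<forall>s \<in> {0..len N k}. \<forall>p \<in> {1..P}.
         th k s \<ge> (\<Sum>e \<in> links N. ldelay N e * z k s p e))
   \<and> (\<forall>k \<in> services N. thetaN N x k + thetaL N th k \<le> thr N k)"

definition NSLP_feasible ::
  "('i, 'k) nsinst \<Rightarrow> ('k \<Rightarrow> 'i \<Rightarrow> nat \<Rightarrow> real) \<Rightarrow> ('i \<Rightarrow> real)
   \<Rightarrow> ('k \<Rightarrow> nat \<Rightarrow> 'i \<times> 'i \<Rightarrow> real) \<Rightarrow> ('k \<Rightarrow> nat \<Rightarrow> real) \<Rightarrow> bool" where
  "NSLP_feasible N x y z th \<longleftrightarrow>
     (\<forall>k \<in> services N. \<forall>v \<in> clouds N. \<forall>s \<in> Fk N k. 0 \<le> x k v s \<and> x k v s \<le> 1)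
   \<and> (\<forall>v \<in> clouds N. 0 \<le> y v \<and> y v \<le> 1)
   \<and> (\<forall>k \<in> services N. \<forall>s \<in> {0..len N k}. \<forall>e \<in> links N. 0 \<le> z k s e \<and> z k s e \<le> 1)
   \<and> (\<forall>k \<in> services N. \<forall>s \<in> {0..len N k}. th k s \<ge> 0)
   \<and> placement_ok N x y
   \<and> (\<forall>e \<in> links N. (\<Sum>k \<in> services N. \<Sum>s \<in> {0..len N k}. rate N k s * z k s e) \<le> cap N e)
   \<and> (\<forall>k \<in> services N. \<forall>s \<in> {0..len N k}. \<forall>i \<in> nodes N.
         (\<Sum>j \<in> {j. (j, i) \<in> links N}. z k s (j, i))
       - (\<Sum>j \<in> {j. (i, j) \<in> links N}. z k s (i, j))
       = xext N x k i (s + 1) - xext N x k i s)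
   \<and> (\<forall>k \<in> services N. \<forall>s \<in> {0..len N k}. th k s \<ge> (\<Sum>e \<in> links N. ldelay N e * z k s e))
   \<and> (\<forall>k \<in> services N. thetaN N x k + thetaL N th k \<le> thr N k)"

end

theory Submission
  imports Defs
begin

lemma Phi_lower:
  assumes wf: "wf_inst N" and F: "NSLP_feasible N x y z th"
  shows "Phi N x y th \<ge> - sigma N * (\<Sum>k \<in> services N. \<Sum>v \<in> clouds N. \<Sum>s \<in> Fk N k. \<bar>nfvdelay N v k s\<bar>)"
proof -
  have sg: "sigma N > 0" using wf unfolding wf_inst_def by auto
  have y0: "(\<Sum>v \<in> clouds N. y v) \<ge> 0"
    using F unfolding NSLP_feasible_def by (intro sum_nonneg) auto
  have tl: "thetaL N th k \<ge> 0" if "k \<in> services N" for k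
    using F that unfolding NSLP_feasible_def thetaL_def by (intro sum_nonneg) auto
  have tn: "thetaN N x k \<ge> - (\<Sum>v \<in> clouds N. \<Sum>s \<in> Fk N k. \<bar>nfvdelay N v k s\<bar>)"
    if k: "k \<in> services N" for k
  proof -
    have "(\<Sum>v \<in> clouds N. \<Sum>s \<in> Fk N k. - \<bar>nfvdelay N v k s\<bar>) \<le> thetaN N x k"
      unfolding thetaN_def
    proof (intro sum_mono)
      fix v s assume v: "v \<in> clouds N" and s: "s \<in> Fk N k"
      have "0 \<le> x k v s" "x k v s \<le> 1" using F k v s unfolding NSLP_feasible_def by auto
      then have "\<bar>nfvdelay N v k s * x k v s\<bar> \<le> \<bar>nfvdelay N v k s\<bar>"
        by (simp add: abs_mult mult_left_le)
      then show "- \<bar>nfvdelay N v k s\<bar> \<le> nfvdelay N v k s * x k v s" by linarith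
    qed
    then show ?thesis by (simp add: sum_negf)
  qed
  have "(\<Sum>k \<in> services N. - (\<Sum>v \<in> clouds N. \<Sum>s \<in> Fk N k. \<bar>nfvdelay N v k s\<bar>))
        \<le> (\<Sum>k \<in> services N. thetaL N th k + thetaN N x k)"
    by (intro sum_mono) (use tl tn in fastforce)
  then have "- (\<Sum>k \<in> services N. \<Sum>v \<in> clouds N. \<Sum>s \<in> Fk N k. \<bar>nfvdelay N v k s\<bar>)
        \<le> (\<Sum>k \<in> services N. thetaL N th k + thetaN N x k)" by (simp add: sum_negf)
  then have "sigma N * (- (\<Sum>k \<in> services N. \<Sum>v \<in> clouds N. \<Sum>s \<in> Fk N k. \<bar>nfvdelay N v k s\<bar>))
        \<le> sigma N * (\<Sum>k \<in> services N. thetaL N th k + thetaN N x k)"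
    using sg by (intro mult_left_mono) auto
  then show ?thesis using y0 unfolding Phi_def by simp
qed

theorem theorem2:
  fixes N :: "('i, 'k) nsinst" and P :: nat
    and x :: "'k \<Rightarrow> 'i \<Rightarrow> nat \<Rightarrow> real" and y :: "'i \<Rightarrow> real"
    and r :: "'k \<Rightarrow> nat \<Rightarrow> nat \<Rightarrow> real"
    and rl z :: "'k \<Rightarrow> nat \<Rightarrow> nat \<Rightarrow> 'i \<times> 'i \<Rightarrow> real"
    and th :: "'k \<Rightarrow> nat \<Rightarrow> real"
  assumes "wf_inst N" and "P \<ge> 1"
    and "NS_feasible N P x y r rl z th"
  shows "(\<exists>zl thl. NSLP_feasible N x y zl thl \<and> Phi N x y thl \<le> Phi N x y th)
       \<and> Inf {Phi N x' y' th' | x' y' z' th'. NSLP_feasible N x' y' z' th'} \<le> Phi N x y th"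
proof -
  note F = assms(3)[unfolded NS_feasible_def]
  define zl where "zl k s e = (\<Sum>p\<in>{1..P}. r k s p * z k s p e)" for k s e
  have r0: "\<And>k s p. k \<in> services N \<Longrightarrow> s \<in> {0..len N k} \<Longrightarrow> p \<in> {1..P} \<Longrightarrow> r k s p \<ge> 0"
    using F by (elim conjE) fast
  have r1: "\<And>k s. k \<in> services N \<Longrightarrow> s \<in> {0..len N k} \<Longrightarrow> (\<Sum>p \<in> {1..P}. r k s p) = 1"
    using F by (elim conjE) fast
  have z01: "\<And>k s p e. k \<in> services N \<Longrightarrow> s \<in> {0..len N k} \<Longrightarrow> p \<in> {1..P} \<Longrightarrow> e \<in> links N
      \<Longrightarrow> z k s p e \<in> {0,1}"
    using F by (elim conjE) fast
  have rlz: "\<And>k s p e. k \<in> services N \<Longrightarrow> s \<in> {0..len N k} \<Longrightarrow> p \<in> {1..P} \<Longrightarrow> e \<in> links N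
      \<Longrightarrow> rl k s p e = r k s p * z k s p e"
    using F by (elim conjE) fast
  have cons: "\<And>k s p i. k \<in> services N \<Longrightarrow> s \<in> {0..len N k} \<Longrightarrow> p \<in> {1..P} \<Longrightarrow> i \<in> nodes N \<Longrightarrow>
         (\<Sum>j \<in> {j. (j, i) \<in> links N}. z k s p (j, i))
       - (\<Sum>j \<in> {j. (i, j) \<in> links N}. z k s p (i, j))
       = xext N x k i (s + 1) - xext N x k i s"
    using F by (elim conjE) fast
  have del: "\<And>k s p. k \<in> services N \<Longrightarrow> s \<in> {0..len N k} \<Longrightarrow> p \<in> {1..P} \<Longrightarrow>
         th k s \<ge> (\<Sum>e \<in> links N. ldelay N e * z k s p e)"
    using F by (elim conjE) fast
  have capc: "\<And>e. e \<in> links N \<Longrightarrow> (\<Sum>k \<in> services N. \<Sum>s \<in> {0..len N k}. \<Sum>p \<in> {1..P}.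
         rate N k s * rl k s p e) \<le> cap N e"
    using F by (elim conjE) fast
  have LP: "NSLP_feasible N x y zl th"
    unfolding NSLP_feasible_def
  proof (intro conjI)
    show "\<forall>k\<in>services N. \<forall>v\<in>clouds N. \<forall>s\<in>Fk N k. 0 \<le> x k v s \<and> x k v s \<le> 1"
      using F by (elim conjE) fastforce
    show "\<forall>v\<in>clouds N. 0 \<le> y v \<and> y v \<le> 1" using F by (elim conjE) fastforce
    show "\<forall>k\<in>services N. \<forall>s\<in>{0..len N k}. 0 \<le> th k s" using F by (elim conjE) fast
    show "placement_ok N x y" using F by (elim conjE) fast
    show "\<forall>k\<in>services N. thetaN N x k + thetaL N th k \<le> thr N k" using F by (elim conjE) fast
    show "\<forall>k\<in>services N. \<forall>s\<in>{0..len N k}. \<forall>e\<in>links N. 0 \<le> zl k s e \<and> zl k s e \<le> 1"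
    proof (intro ballI conjI)
      fix k s e assume k: "k \<in> services N" and s: "s \<in> {0..len N k}" and e: "e \<in> links N"
      have a: "0 \<le> r k s p * z k s p e" "r k s p * z k s p e \<le> r k s p" if "p \<in> {1..P}" for p
        using r0[OF k s that] z01[OF k s that e] by auto
      show "0 \<le> zl k s e" unfolding zl_def by (intro sum_nonneg) (use a in auto)
      have "zl k s e \<le> (\<Sum>p \<in> {1..P}. r k s p)" unfolding zl_def by (intro sum_mono) (use a in auto)
      then show "zl k s e \<le> 1" using r1[OF k s] by simp
    qed
    show "\<forall>e\<in>links N. (\<Sum>k\<in>services N. \<Sum>s = 0..len N k. rate N k s * zl k s e) \<le> cap N e"
    proof
      fix e assume e: "e \<in> links N"
      have "(\<Sum>k\<in>services N. \<Sum>s = 0..len N k. rate N k s * zl k s e)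
          = (\<Sum>k \<in> services N. \<Sum>s \<in> {0..len N k}. \<Sum>p \<in> {1..P}. rate N k s * rl k s p e)"
        unfolding zl_def sum_distrib_left
        by (intro sum.cong refl) (simp add: rlz e)
      then show "(\<Sum>k\<in>services N. \<Sum>s = 0..len N k. rate N k s * zl k s e) \<le> cap N e"
        using capc[OF e] by simp
    qed
    show "\<forall>k\<in>services N. \<forall>s\<in>{0..len N k}. \<forall>i\<in>nodes N.
       (\<Sum>j\<in>{j. (j, i) \<in> links N}. zl k s (j, i)) - (\<Sum>j\<in>{j. (i, j) \<in> links N}. zl k s (i, j)) =
       xext N x k i (s + 1) - xext N x k i s"
    proof (intro ballI)
      fix k s i assume k: "k \<in> services N" and s: "s \<in> {0..len N k}" and i: "i \<in> nodes N"
      have "(\<Sum>j\<in>{j. (j, i) \<in> links N}. zl k s (j, i)) - (\<Sum>j\<in>{j. (i, j) \<in> links N}. zl k s (i, j))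
          = (\<Sum>p \<in> {1..P}. r k s p * ((\<Sum>j \<in> {j. (j, i) \<in> links N}. z k s p (j, i))
                 - (\<Sum>j \<in> {j. (i, j) \<in> links N}. z k s p (i, j))))"
        unfolding zl_def right_diff_distrib sum_subtractf sum_distrib_left
        by (simp only: sum.swap[of _ _ "{1..P}"])
      also have "\<dots> = (\<Sum>p \<in> {1..P}. r k s p * (xext N x k i (s + 1) - xext N x k i s))"
        by (intro sum.cong refl) (simp add: cons[OF k s _ i])
      also have "\<dots> = xext N x k i (s + 1) - xext N x k i s"
        using r1[OF k s] by (simp add: sum_distrib_right[symmetric])
      finally show "(\<Sum>j\<in>{j. (j, i) \<in> links N}. zl k s (j, i)) - (\<Sum>j\<in>{j. (i, j) \<in> links N}. zl k s (i, j)) =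
       xext N x k i (s + 1) - xext N x k i s" .
    qed
    show "\<forall>k\<in>services N. \<forall>s\<in>{0..len N k}. (\<Sum>e\<in>links N. ldelay N e * zl k s e) \<le> th k s"
    proof (intro ballI)
      fix k s assume k: "k \<in> services N" and s: "s \<in> {0..len N k}"
      have "(\<Sum>e\<in>links N. ldelay N e * zl k s e) = (\<Sum>p \<in> {1..P}. r k s p * (\<Sum>e\<in>links N. ldelay N e * z k s p e))"
        unfolding zl_def sum_distrib_left
        by (simp only: sum.swap[of _ _ "{1..P}"] mult_ac)
      also have "\<dots> \<le> (\<Sum>p \<in> {1..P}. r k s p * th k s)"
        by (intro sum_mono mult_left_mono) (auto intro: del[OF k s] r0[OF k s])
      also have "\<dots> = th k s" using r1[OF k s] by (simp add: sum_distrib_right[symmetric])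
      finally show "(\<Sum>e\<in>links N. ldelay N e * zl k s e) \<le> th k s" .
    qed
  qed
  have inf: "Inf {Phi N x' y' th' | x' y' z' th'. NSLP_feasible N x' y' z' th'} \<le> Phi N x y th"
  proof (rule cInf_lower)
    show "Phi N x y th \<in> {Phi N x' y' th' | x' y' z' th'. NSLP_feasible N x' y' z' th'}"
      using LP by blast
    show "bdd_below {Phi N x' y' th' | x' y' z' th'. NSLP_feasible N x' y' z' th'}"
      unfolding bdd_below_def using Phi_lower[OF assms(1)] by blast
  qed
  show ?thesis using LP inf by blast
qed

end
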